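(* Let $(X,\ast,u,d)$ be a finite GL-rack, let $\Delta=\alpha_1\cdots\alpha_n$ be the disjoint cycle decomposition of its diagonal map (fixed points counted as $1$-cycles), $A_i=\operatorname{supp}(\alpha_i)$, and let $B_1,\dots,B_m$ be the sets obtained by taking, for each cycle length $\ell$ occurring, the union of all $A_i$ with $|A_i|=\ell$. Then for each $1\le j\le m$, $B_j\ast X:=\{b\ast x: b\in B_j, x\in X\}=B_j$.
   Context: A rack is a set $X$ with a binary operation $\ast$ such that for every $y\in X$ the map $x\mapsto x\ast y$ is a bijection of $X$ and $(x\ast y)\ast z=(x\ast z)\ast(y\ast z)$ for all $x,y,z$. A GL-rack is a quadruple $(X,\ast,u,d)$ where $(X,\ast)$ is a rack and $u,d\colon X\to X$ are maps such that for all $x,y\in X$: $u(d(x\ast x))=d(u(x\ast x))=x$; $u(x\ast y)=u(x)\ast y$ and $d(x\ast y)=d(x)\ast y$; $x\ast u(y)=x\ast d(y)=x\ast y$. The diagonal map is $\Delta(x)=x\ast x$; for a finite GL-rack it is a bijection (rack automorphism) and $\Delta=(u\circ d)^{-1}$. *)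

theory Defs
  imports Main "HOL-Combinatorics.Orbits"
begin

definition is_rack :: "'a set \<Rightarrow> ('a \<Rightarrow> 'a \<Rightarrow> 'a) \<Rightarrow> bool" where
  "is_rack X op \<longleftrightarrow>
     (\<forall>x\<in>X. \<forall>y\<in>X. op x y \<in> X) \<and>
     (\<forall>y\<in>X. bij_betw (\<lambda>x. op x y) X X) \<and>
     (\<forall>x\<in>X. \<forall>y\<in>X. \<forall>z\<in>X. op (op x y) z = op (op x z) (op y z))"

definition is_GL_rack :: "'a set \<Rightarrow> ('a \<Rightarrow> 'a \<Rightarrow> 'a) \<Rightarrow> ('a \<Rightarrow> 'a) \<Rightarrow> ('a \<Rightarrow> 'a) \<Rightarrow> bool" where
  "is_GL_rack X op u d \<longleftrightarrow>
     is_rack X op \<and>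
     (\<forall>x\<in>X. u x \<in> X) \<and> (\<forall>x\<in>X. d x \<in> X) \<and>
     (\<forall>x\<in>X. u (d (op x x)) = x \<and> d (u (op x x)) = x) \<and>
     (\<forall>x\<in>X. \<forall>y\<in>X. u (op x y) = op (u x) y \<and> d (op x y) = op (d x) y) \<and>
     (\<forall>x\<in>X. \<forall>y\<in>X. op x (u y) = op x y \<and> op x (d y) = op x y)"

definition diag :: "('a \<Rightarrow> 'a \<Rightarrow> 'a) \<Rightarrow> 'a \<Rightarrow> 'a" where
  "diag op x = op x x"

definition cycle_length :: "('a \<Rightarrow> 'a \<Rightarrow> 'a) \<Rightarrow> 'a \<Rightarrow> nat" where
  "cycle_length op x = card (orbit (diag op) x)"

end

theory Submission
  imports Defs
begin

lemma rack_closed: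
  assumes "is_rack X op" "x \<in> X" "y \<in> X"
  shows "op x y \<in> X"
  using assms unfolding is_rack_def by blast

lemma rack_dist:
  assumes "is_rack X op" "x \<in> X" "y \<in> X" "z \<in> X"
  shows "op (op x y) z = op (op x z) (op y z)"
  using assms unfolding is_rack_def by blast

lemma pow_in:
  assumes "is_rack X op" "y \<in> X"
  shows "(diag op ^^ n) y \<in> X"
proof (induction n)
  case (Suc n)
  then show ?case using rack_closed[OF assms(1) Suc Suc] by (simp add: diag_def)
qed (simp add: assms)

lemma pow_comm:
  assumes "is_rack X op" "y \<in> X" "x \<in> X"
  shows "(diag op ^^ n) (op y x) = op ((diag op ^^ n) y) x"
proof (induction n)
  case (Suc n)
  have w: "(diag op ^^ n) y \<in> X" by (rule pow_in[OF assms(1,2)])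
  have "(diag op ^^ Suc n) (op y x) = diag op (op ((diag op ^^ n) y) x)" using Suc by simp
  also have "\<dots> = op (op ((diag op ^^ n) y) x) (op ((diag op ^^ n) y) x)" by (simp add: diag_def)
  also have "\<dots> = op (diag op ((diag op ^^ n) y)) x"
    using rack_dist[OF assms(1) w w assms(3)] by (simp add: diag_def)
  finally show ?case by simp
qed simp

lemma orbit_img:
  assumes "is_rack X op" "y \<in> X" "x \<in> X"
  shows "orbit (diag op) (op y x) = (\<lambda>z. op z x) ` orbit (diag op) y"
proof -
  have "{(diag op ^^ n) (op y x) |n. 0 < n} = {op ((diag op ^^ n) y) x |n. 0 < n}"
    by (simp add: pow_comm[OF assms])
  also have "\<dots> = (\<lambda>z. op z x) ` {(diag op ^^ n) y |n. 0 < n}" by blast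
  finally show ?thesis unfolding orbit_altdef .
qed

lemma orbit_sub:
  assumes "is_rack X op" "y \<in> X"
  shows "orbit (diag op) y \<subseteq> X"
  unfolding orbit_altdef using pow_in[OF assms] by blast

lemma cl_eq:
  assumes "is_rack X op" "y \<in> X" "x \<in> X"
  shows "cycle_length op (op y x) = cycle_length op y"
proof -
  have "bij_betw (\<lambda>z. op z x) X X" using assms unfolding is_rack_def by blast
  then have "inj_on (\<lambda>z. op z x) X" by (rule bij_betw_imp_inj_on)
  then have "inj_on (\<lambda>z. op z x) (orbit (diag op) y)"
    using orbit_sub[OF assms(1,2)] inj_on_subset by blast
  then show ?thesis unfolding cycle_length_def orbit_img[OF assms] by (simp add: card_image)
qed

theorem proposition3p7:
  fixes X :: "'a set" and op :: "'a \<Rightarrow> 'a \<Rightarrow> 'a" and u d :: "'a \<Rightarrow> 'a" and l :: nat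
  assumes "finite X"
    and "is_GL_rack X op u d"
    and "\<exists>x\<in>X. cycle_length op x = l"
  shows "{op b x | b x. b \<in> {y \<in> X. cycle_length op y = l} \<and> x \<in> X}
           = {y \<in> X. cycle_length op y = l}"
proof -
  have R: "is_rack X op" using assms(2) by (simp add: is_GL_rack_def)
  obtain x0 where x0: "x0 \<in> X" using assms(3) by blast
  show ?thesis
  proof (rule set_eqI, rule iffI)
    fix z assume "z \<in> {op b x | b x. b \<in> {y \<in> X. cycle_length op y = l} \<and> x \<in> X}"
    then obtain b x where "z = op b x" "b \<in> X" "cycle_length op b = l" "x \<in> X" by blast
    moreover have "op b x \<in> X" using R \<open>b \<in> X\<close> \<open>x \<in> X\<close> unfolding is_rack_def by blast
    ultimately show "z \<in> {y \<in> X. cycle_length op y = l}"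
      using cl_eq[OF R \<open>b \<in> X\<close> \<open>x \<in> X\<close>] by simp
  next
    fix z assume z: "z \<in> {y \<in> X. cycle_length op y = l}"
    have "bij_betw (\<lambda>w. op w x0) X X" using R x0 unfolding is_rack_def by blast
    then have "(\<lambda>w. op w x0) ` X = X" by (rule bij_betw_imp_surj_on)
    then have "z \<in> (\<lambda>w. op w x0) ` X" using z by simp
    then obtain b where b: "b \<in> X" "op b x0 = z" by blast
    then have "cycle_length op b = l" using cl_eq[OF R b(1) x0] z by simp
    then show "z \<in> {op b x | b x. b \<in> {y \<in> X. cycle_length op y = l} \<and> x \<in> X}"
      using b x0 by blast
  qed
qed

end
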